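(* Let $K$ be a field of characteristic $p>0$ and $A^*$ a graded Hopf algebra over $K$ with a decreasing filtration $\mathfrak F=(F_iA^* )_{i\in\mathbb Z}$ satisfying (E1), (E2), (E3), (E4), (E6), (E7), (E8). A left $A^*$-module $M^*$ with structure map $\alpha\colon A^*\otimes M^*\to M^*$ is unstable with respect to $\mathfrak F$ if and only if $\alpha\big((F_{2i+\varepsilon}A^* )^{2i(p-1)+\varepsilon}\otimes M^k\big)=\{0\}$ for all $i\in\mathbb Z$, $\varepsilon\in\{0,1\}$ and $k\in\mathbb Z$ with $k<2i+\varepsilon$.
   Context: Let $A^*$ be a graded Hopf algebra over a field $K$ of characteristic $p$, with product $\mu$ and a decreasing filtration $\mathfrak F=(F_iA^* )_{i\in\mathbb Z}$ by graded subspaces. A left $A^*$-module $M^*$ with structure map $\alpha$ is unstable if $\alpha(F_{n+1}A^*\otimes M^n)=\{0\}$ for all $n\in\mathbb Z$. Put $E_i^jA^*=(F_iA^* )^j/(F_{i+1}A^* )^j$. Conditions: (E1) $F_iA^*=A^*$ for $i\le0$; (E2) $\bigcap_iF_iA^*=\{0\}$; (E3) each $F_iA^*$ is a left ideal; (E4) $\mu(F_iA^*\otimes A^j)\subset F_{i-j}A^*$ for all $i,j$; (E6) for $i,k\in\mathbb Z$, $\varepsilon\in\{0,1\}$, $E_{2i+\varepsilon}^kA^*=\{0\}$ if $k<2i(p-1)+\varepsilon$ or $2i+\varepsilon+k\not\equiv0,2\pmod{2p}$; (E7) $\dim E_{2i+\varepsilon}^{2i(p-1)+\varepsilon}A^*=1$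 for $i\ge0$, $\varepsilon\in\{0,1\}$; (E8) for all integers $i,j\ge0$ and $\varepsilon\in\{0,1\}$, the map $\tilde\mu_{2i+\varepsilon}^{2i(p-1)+\varepsilon,j}\colon E_{2i+\varepsilon}^{2i(p-1)+\varepsilon}A^*\otimes(A^*/F_{2i-j+\varepsilon+1}A^* )^j\to E_{2i-j+\varepsilon}^{2i(p-1)+j+\varepsilon}A^*$, $[a]\otimes[b]\mapsto[ab]$ (well defined by (E3),(E4)), is an isomorphism. *)

theory Defs
  imports Complex_Main
begin

(* A graded vector space over the field 'k: the ambient type 'v (a K-vector space
   via the scalar multiplication s) is the internal direct sum of the subspaces V j,
   j \<in> int (V j = V^j, the homogeneous part of degree j). *)
definition graded_vs :: "('k::field \<Rightarrow> 'v::ab_group_add \<Rightarrow> 'v) \<Rightarrow> (int \<Rightarrow> 'v set) \<Rightarrow> bool" where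
  "graded_vs s V \<longleftrightarrow> vector_space s
     \<and> (\<forall>j. module.subspace s (V j))
     \<and> module.span s (\<Union>j. V j) = UNIV
     \<and> (\<forall>J f. finite J \<longrightarrow> (\<forall>j\<in>J. f j \<in> V j) \<longrightarrow> (\<Sum>j\<in>J. f j) = 0 \<longrightarrow> (\<forall>j\<in>J. f j = 0))"

definition graded_subspace :: "('k::field \<Rightarrow> 'v::ab_group_add \<Rightarrow> 'v) \<Rightarrow> (int \<Rightarrow> 'v set) \<Rightarrow> 'v set \<Rightarrow> bool" where
  "graded_subspace s V S \<longleftrightarrow> module.subspace s S \<and> S \<subseteq> module.span s (\<Union>j. S \<inter> V j)"

definition graded_algebra :: "('k::field \<Rightarrow> 'a::ab_group_add \<Rightarrow> 'a) \<Rightarrow> (int \<Rightarrow> 'a set)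
    \<Rightarrow> ('a \<Rightarrow> 'a \<Rightarrow> 'a) \<Rightarrow> 'a \<Rightarrow> bool" where
  "graded_algebra s A mul one \<longleftrightarrow> graded_vs s A
     \<and> (\<forall>x y z. mul (x + y) z = mul x z + mul y z)
     \<and> (\<forall>x y z. mul x (y + z) = mul x y + mul x z)
     \<and> (\<forall>c x y. mul (s c x) y = s c (mul x y))
     \<and> (\<forall>c x y. mul x (s c y) = s c (mul x y))
     \<and> (\<forall>x y z. mul (mul x y) z = mul x (mul y z))
     \<and> one \<in> A 0 \<and> (\<forall>x. mul one x = x \<and> mul x one = x)
     \<and> (\<forall>i j x y. x \<in> A i \<longrightarrow> y \<in> A j \<longrightarrow> mul x y \<in> A (i + j))"

(* A graded left module over the graded algebra (A, mul, one); the structure map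
   alpha : A \<otimes> M \<rightarrow> M is given as the bilinear map act *)
definition graded_left_module :: "('k::field \<Rightarrow> 'a::ab_group_add \<Rightarrow> 'a) \<Rightarrow> (int \<Rightarrow> 'a set)
    \<Rightarrow> ('a \<Rightarrow> 'a \<Rightarrow> 'a) \<Rightarrow> 'a
    \<Rightarrow> ('k \<Rightarrow> 'm::ab_group_add \<Rightarrow> 'm) \<Rightarrow> (int \<Rightarrow> 'm set) \<Rightarrow> ('a \<Rightarrow> 'm \<Rightarrow> 'm) \<Rightarrow> bool" where
  "graded_left_module s A mul one sM M act \<longleftrightarrow> graded_vs sM M
     \<and> (\<forall>x y m. act (x + y) m = act x m + act y m)
     \<and> (\<forall>x m n. act x (m + n) = act x m + act x n)
     \<and> (\<forall>c x m. act (s c x) m = sM c (act x m))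
     \<and> (\<forall>c x m. act x (sM c m) = sM c (act x m))
     \<and> (\<forall>x y m. act (mul x y) m = act x (act y m))
     \<and> (\<forall>m. act one m = m)
     \<and> (\<forall>i j x m. x \<in> A i \<longrightarrow> m \<in> M j \<longrightarrow> act x m \<in> M (i + j))"

(* dim_K (S/T) = n, for subspaces T \<subseteq> S, stated via a finite family of n vectors of S
   whose classes form a basis of S/T *)
definition quot_dim :: "('k::field \<Rightarrow> 'v::ab_group_add \<Rightarrow> 'v) \<Rightarrow> 'v set \<Rightarrow> 'v set \<Rightarrow> nat \<Rightarrow> bool" where
  "quot_dim s S T n \<longleftrightarrow> (\<exists>B. finite B \<and> card B = n \<and> B \<subseteq> S
     \<and> (\<forall>c. (\<Sum>b\<in>B. s (c b) b) \<in> T \<longrightarrow> (\<forall>b\<in>B. c b = 0))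
     \<and> S \<subseteq> {x + t | x t. x \<in> module.span s B \<and> t \<in> T})"

definition quot_basis :: "('k::field \<Rightarrow> 'v::ab_group_add \<Rightarrow> 'v) \<Rightarrow> 'v set \<Rightarrow> 'v set \<Rightarrow> 'v set \<Rightarrow> bool" where
  "quot_basis s U U0 B \<longleftrightarrow> B \<subseteq> U
     \<and> (\<forall>B' c. finite B' \<longrightarrow> B' \<subseteq> B \<longrightarrow> (\<Sum>b\<in>B'. s (c b) b) \<in> U0 \<longrightarrow> (\<forall>b\<in>B'. c b = 0))
     \<and> U \<subseteq> {x + t | x t. x \<in> module.span s B \<and> t \<in> U0}"

(* The linear map (U/U0) \<otimes>_K (V/V0) \<rightarrow> W/W0, [u] \<otimes> [v] \<mapsto> [beta u v], is an isomorphism.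
   Every element of (U/U0) \<otimes> (V/V0) is uniquely a finite sum \<Sum> [b] \<otimes> [v_b] with b
   running over a basis of U/U0; so bijectivity means: for every basis B of U/U0,
   (surjectivity) every w \<in> W is congruent mod W0 to some finite \<Sum> beta b v_b, and
   (injectivity) if a finite \<Sum> beta b v_b lies in W0 then all v_b lie in V0. *)
definition quot_tensor_iso :: "('k::field \<Rightarrow> 'a::ab_group_add \<Rightarrow> 'a) \<Rightarrow> ('a \<Rightarrow> 'a \<Rightarrow> 'a)
    \<Rightarrow> 'a set \<Rightarrow> 'a set \<Rightarrow> 'a set \<Rightarrow> 'a set \<Rightarrow> 'a set \<Rightarrow> 'a set \<Rightarrow> bool" where
  "quot_tensor_iso s beta U U0 V V0 W W0 \<longleftrightarrow> (\<forall>B. quot_basis s U U0 B \<longrightarrow>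
      (\<forall>w\<in>W. \<exists>B' v. finite B' \<and> B' \<subseteq> B \<and> (\<forall>b\<in>B'. v b \<in> V)
                   \<and> w - (\<Sum>b\<in>B'. beta b (v b)) \<in> W0)
    \<and> (\<forall>B' v. finite B' \<longrightarrow> B' \<subseteq> B \<longrightarrow> (\<forall>b\<in>B'. v b \<in> V)
                   \<longrightarrow> (\<Sum>b\<in>B'. beta b (v b)) \<in> W0 \<longrightarrow> (\<forall>b\<in>B'. v b \<in> V0)))"

definition unstable :: "(int \<Rightarrow> 'a set) \<Rightarrow> (int \<Rightarrow> 'm::zero set) \<Rightarrow> ('a \<Rightarrow> 'm \<Rightarrow> 'm) \<Rightarrow> bool" where
  "unstable F M act \<longleftrightarrow> (\<forall>n a m. a \<in> F (n + 1) \<longrightarrow> m \<in> M n \<longrightarrow> act a m = 0)"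

end

theory Submission
  imports Defs
begin


lemma decr_F:
  fixes F :: "int \<Rightarrow> 'a set"
  assumes "\<forall>i. F (i + 1) \<subseteq> F i" "i \<le> j"
  shows "F j \<subseteq> F i"
  using assms(2)
proof (induction j rule: int_ge_induct)
  case base then show ?case by simp
next
  case (step k) then show ?case using assms(1) by blast
qed

lemma act_zero:
  fixes act :: "'a::ab_group_add \<Rightarrow> 'm::ab_group_add \<Rightarrow> 'm"
  assumes "\<forall>x y m. act (x + y) m = act x m + act y m"
  shows "act 0 m = (0::'m::ab_group_add)"
proof -
  have "act (0 + 0) m = act 0 m + act 0 m" using assms by blast
  then show ?thesis by (metis add_cancel_right_left)
qed

lemma act_diff:
  fixes act :: "'a::ab_group_add \<Rightarrow> 'm::ab_group_add \<Rightarrow> 'm"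
  assumes "\<forall>x y m. act (x + y) m = act x m + act y m"
  shows "act (x - y) m = act x m - (act y m::'m::ab_group_add)"
proof -
  have "act ((x - y) + y) m = act (x - y) m + act y m" using assms by blast
  then show ?thesis by simp
qed

lemma act_sum:
  fixes act :: "'a::ab_group_add \<Rightarrow> 'm::ab_group_add \<Rightarrow> 'm"
  assumes "\<forall>x y m. act (x + y) m = act x m + act y m"
  shows "act (sum f S) m = (\<Sum>x\<in>S. act (f x) m::'m::ab_group_add)"
proof (induction S rule: infinite_finite_induct)
  case (infinite A) then show ?case using act_zero[OF assms] by simp
next
  case empty then show ?case using act_zero[OF assms] by simp
next
  case (insert x F) then show ?case using assms by simp
qed

lemma quot_dim0:
  assumes "vector_space s" "quot_dim s S T 0"
  shows "S \<subseteq> T"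
proof -
  interpret V: vector_space s by fact
  from assms(2) obtain B where "finite B" "card B = 0"
    "S \<subseteq> {x + t | x t. x \<in> V.span B \<and> t \<in> T}"
    unfolding quot_dim_def by blast
  then show ?thesis by auto
qed

lemma quot_dim1:
  assumes "vector_space s" "quot_dim s U U0 1"
  shows "\<exists>B. quot_basis s U U0 B"
proof -
  interpret V: vector_space s by fact
  from assms(2) obtain B where B: "finite B" "card B = 1" "B \<subseteq> U"
    "\<forall>c. (\<Sum>b\<in>B. s (c b) b) \<in> U0 \<longrightarrow> (\<forall>b\<in>B. c b = 0)"
    "U \<subseteq> {x + t | x t. x \<in> V.span B \<and> t \<in> U0}"
    unfolding quot_dim_def by blast
  then obtain b where Bb: "B = {b}" using card_1_singletonE by blast
  have "quot_basis s U U0 B"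
    unfolding quot_basis_def
  proof (intro conjI allI impI)
    show "B \<subseteq> U" by fact
    show "U \<subseteq> {x + t | x t. x \<in> V.span B \<and> t \<in> U0}" by fact
  next
    fix B' c assume "finite B'" "B' \<subseteq> B" "(\<Sum>b\<in>B'. s (c b) b) \<in> U0"
    then show "\<forall>b\<in>B'. c b = 0"
      using B(4) Bb by (cases "B' = {}") (auto simp: subset_singleton_iff)
  qed
  then show ?thesis by blast
qed

theorem proposition3p5:
  fixes s :: "'k::field \<Rightarrow> 'a::ab_group_add \<Rightarrow> 'a"
    and A :: "int \<Rightarrow> 'a set" and mul :: "'a \<Rightarrow> 'a \<Rightarrow> 'a" and one :: 'a
    and F :: "int \<Rightarrow> 'a set"
    and sM :: "'k \<Rightarrow> 'm::ab_group_add \<Rightarrow> 'm" and M :: "int \<Rightarrow> 'm set"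
    and act :: "'a \<Rightarrow> 'm \<Rightarrow> 'm"
    and p :: nat
  assumes char: "CHAR('k) = p" and p_pos: "p > 0"
    and alg: "graded_algebra s A mul one"
    and filt_graded: "\<forall>i. graded_subspace s A (F i)"
    and filt_decr: "\<forall>i. F (i + 1) \<subseteq> F i"
    and E1: "\<forall>i \<le> 0. F i = UNIV"
    and E2: "(\<Inter>i. F i) = {0}"
    and E3: "\<forall>i a x. x \<in> F i \<longrightarrow> mul a x \<in> F i"
    and E4: "\<forall>i j a b. a \<in> F i \<longrightarrow> b \<in> A j \<longrightarrow> mul a b \<in> F (i - j)"
    and E6: "\<forall>i k \<epsilon>::int. \<epsilon> \<in> {0, 1} \<longrightarrow>
               (k < 2 * i * (int p - 1) + \<epsilon> \<or> (2 * i + \<epsilon> + k) mod (2 * int p) \<notin> {0, 2})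
               \<longrightarrow> quot_dim s (F (2 * i + \<epsilon>) \<inter> A k) (F (2 * i + \<epsilon> + 1) \<inter> A k) 0"
    and E7: "\<forall>i \<epsilon>::int. i \<ge> 0 \<longrightarrow> \<epsilon> \<in> {0, 1} \<longrightarrow>
               quot_dim s (F (2 * i + \<epsilon>) \<inter> A (2 * i * (int p - 1) + \<epsilon>))
                          (F (2 * i + \<epsilon> + 1) \<inter> A (2 * i * (int p - 1) + \<epsilon>)) 1"
    and E8: "\<forall>i j \<epsilon>::int. i \<ge> 0 \<longrightarrow> j \<ge> 0 \<longrightarrow> \<epsilon> \<in> {0, 1} \<longrightarrow>
               quot_tensor_iso s mul
                 (F (2 * i + \<epsilon>) \<inter> A (2 * i * (int p - 1) + \<epsilon>))
                 (F (2 * i + \<epsilon> + 1) \<inter> A (2 * i * (int p - 1) + \<epsilon>))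
                 (A j)
                 (F (2 * i - j + \<epsilon> + 1) \<inter> A j)
                 (F (2 * i - j + \<epsilon>) \<inter> A (2 * i * (int p - 1) + j + \<epsilon>))
                 (F (2 * i - j + \<epsilon> + 1) \<inter> A (2 * i * (int p - 1) + j + \<epsilon>))"
    and module: "graded_left_module s A mul one sM M act"
  shows "unstable F M act \<longleftrightarrow>
    (\<forall>i k \<epsilon>::int. \<epsilon> \<in> {0, 1} \<longrightarrow> k < 2 * i + \<epsilon> \<longrightarrow>
       (\<forall>a m. a \<in> F (2 * i + \<epsilon>) \<inter> A (2 * i * (int p - 1) + \<epsilon>) \<longrightarrow> m \<in> M k \<longrightarrow> act a m = 0))"
proof
  assume U: "unstable F M act"
  show "\<forall>i k \<epsilon>::int. \<epsilon> \<in> {0, 1} \<longrightarrow> k < 2 * i + \<epsilon> \<longrightarrow>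
       (\<forall>a m. a \<in> F (2 * i + \<epsilon>) \<inter> A (2 * i * (int p - 1) + \<epsilon>) \<longrightarrow> m \<in> M k \<longrightarrow> act a m = 0)"
  proof (intro allI impI)
    fix i k \<epsilon> :: int and a m
    assume "k < 2 * i + \<epsilon>" "a \<in> F (2 * i + \<epsilon>) \<inter> A (2 * i * (int p - 1) + \<epsilon>)" "m \<in> M k"
    moreover have "F (2 * i + \<epsilon>) \<subseteq> F (k + 1)" using decr_F[OF filt_decr] \<open>k < 2 * i + \<epsilon>\<close> by simp
    ultimately show "act a m = 0" using U unfolding unstable_def by blast
  qed
next
  assume H: "\<forall>i k \<epsilon>::int. \<epsilon> \<in> {0, 1} \<longrightarrow> k < 2 * i + \<epsilon> \<longrightarrow>
       (\<forall>a m. a \<in> F (2 * i + \<epsilon>) \<inter> A (2 * i * (int p - 1) + \<epsilon>) \<longrightarrow> m \<in> M k \<longrightarrow> act a m = 0)"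
  have VA: "vector_space s" using alg unfolding graded_algebra_def graded_vs_def by blast
  have VM: "vector_space sM" using module unfolding graded_left_module_def graded_vs_def by blast
  interpret VA: vector_space s by (rule VA)
  interpret VM: vector_space sM by (rule VM)
  have add: "\<forall>x y m. act (x + y) m = act x m + act y m"
    and sc: "\<forall>c x m. act (s c x) m = sM c (act x m)"
    and mulact: "\<forall>x y m. act (mul x y) m = act x (act y m)"
    and gr: "\<forall>i j x m. x \<in> A i \<longrightarrow> m \<in> M j \<longrightarrow> act x m \<in> M (i + j)"
    using module unfolding graded_left_module_def by blast+
  have p2: "p \<ge> 2" using char p_pos CHAR_not_1[where 'a='k] by linarith
  have homog: "act x m = 0" if n: "m \<in> M n" and x: "x \<in> F (n + 1) \<inter> A j" for n j x m
  proof -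
    define N where "N = 2 * \<bar>j\<bar> + 2"
    have big: "F i \<inter> A j \<subseteq> F (i + 1)" if "i \<ge> N" for i
    proof -
      define a where "a = i div 2"
      define \<delta> where "\<delta> = i mod 2"
      have i: "i = 2 * a + \<delta>" and d: "\<delta> \<in> {0,1}" unfolding a_def \<delta>_def by auto
      have "a \<ge> \<bar>j\<bar> + 1" using that i d unfolding N_def by auto
      moreover have "2 * a \<le> 2 * a * (int p - 1)"
      proof -
        have "2 * a * 1 \<le> 2 * a * (int p - 1)"
          using p2 \<open>a \<ge> \<bar>j\<bar> + 1\<close> by (intro mult_left_mono) auto
        then show ?thesis by simp
      qed
      ultimately have "j < 2 * a * (int p - 1) + \<delta>" using d by auto
      then have "quot_dim s (F (2 * a + \<delta>) \<inter> A j) (F (2 * a + \<delta> + 1) \<inter> A j) 0"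
        using E6 d by blast
      then show ?thesis using quot_dim0[OF VA] i by blast
    qed
    have zeroN: "F N \<inter> A j \<subseteq> {0}"
    proof
      fix y assume y: "y \<in> F N \<inter> A j"
      have up: "y \<in> F (N + int d)" for d :: nat
      proof (induction d)
        case 0 then show ?case using y by simp
      next
        case (Suc d)
        then have "y \<in> F (N + int d + 1)" using big[of "N + int d"] y by auto
        then show ?case by (simp add: ac_simps)
      qed
      have "y \<in> F i" for i
      proof (cases "i \<le> N")
        case True then show ?thesis using decr_F[OF filt_decr True] y by blast
      next
        case False then have "i = N + int (nat (i - N))" by simp
        then show ?thesis using up[of "nat (i - N)"] by metis
      qed
      then show "y \<in> {0}" using E2 by blast
    qed
    define Q where "Q i \<longleftrightarrow> (i \<ge> n + 1 \<longrightarrow> (\<forall>y \<in> F i \<inter> A j. act y m = 0))" for i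
    have QN: "Q i" if "i \<ge> N" for i
      unfolding Q_def using zeroN decr_F[OF filt_decr that] act_zero[OF add] by blast
    have stepQ: "\<forall>y \<in> F i \<inter> A j. act y m = 0"
      if i1: "i \<ge> n + 1" and IH: "\<forall>y \<in> F (i + 1) \<inter> A j. act y m = 0" for i
    proof
      fix y assume y: "y \<in> F i \<inter> A j"
      show "act y m = 0"
      proof (cases "i < 0")
        case True
        then have "y \<in> F (i + 1)" using E1 by simp
        then show ?thesis using IH y by blast
      next
        case False
        define a where "a = i div 2"
        define \<delta> where "\<delta> = i mod 2"
        have i: "i = 2 * a + \<delta>" and d: "\<delta> \<in> {0,1}" unfolding a_def \<delta>_def by auto
        have a0: "a \<ge> 0" using False unfolding a_def by simp
        show ?thesis
        proof (cases "j < 2 * a * (int p - 1) + \<delta> \<or> (2 * a + \<delta> + j) mod (2 * int p) \<notin> {0, 2}")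
          case True
          then have "quot_dim s (F (2 * a + \<delta>) \<inter> A j) (F (2 * a + \<delta> + 1) \<inter> A j) 0"
            using E6 d by blast
          then have "y \<in> F (i + 1)" using quot_dim0[OF VA] i y by blast
          then show ?thesis using IH y by blast
        next
          case False
          then have jge: "j \<ge> 2 * a * (int p - 1) + \<delta>"
            and md: "(i + j) mod (2 * int p) \<in> {0, 2}" using i by auto
          define e where "e = (i + j) mod (2 * int p) div 2"
          define i' where "i' = (i + j) div (2 * int p)"
          have e: "e \<in> {0,1}" using md unfolding e_def by auto
          have eb: "0 \<le> e" "e \<le> 1" using e by auto
          have db: "0 \<le> \<delta>" "\<delta> \<le> 1" using d by auto
          have p2i: "int p \<ge> 2" using p2 by simp
          have dm: "i + j = 2 * int p * i' + (i + j) mod (2 * int p)"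
            unfolding i'_def by (metis mult_div_mod_eq)
          have "(i + j) mod (2 * int p) = 2 * e" using md unfolding e_def by auto
          then have ij: "i + j = 2 * int p * i' + 2 * e" using dm by simp
          have ge: "2 * i' + e \<ge> i"
          proof (rule ccontr)
            assume "\<not> ?thesis"
            then have lt: "2 * i' + e < 2 * a + \<delta>" using i by simp
            have s1: "i + j = 2 * (int p * a) + 2 * \<delta> + (j - 2 * a * (int p - 1) - \<delta>)"
              using i by (simp add: algebra_simps)
            have key: "int p * i' + e \<ge> int p * a + \<delta>"
            proof -
              have "2 * (int p * i') + 2 * e \<ge> 2 * (int p * a) + 2 * \<delta>"
                using s1 ij jge by (simp add: algebra_simps)
              then show ?thesis by linarith
            qed
            show False
            proof (cases "i' \<le> a - 1")
              case True
              then have "int p * i' \<le> int p * (a - 1)" by (simp add: mult_left_mono)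
              then have "int p * i' \<le> int p * a - int p" by (simp add: right_diff_distrib)
              then show False using key p2i eb db by linarith
            next
              case False
              then have "i' \<ge> a" by linarith
              moreover have "2 * i' < 2 * a + 1" using lt eb db by linarith
              ultimately have "i' = a" by linarith
              then have "e = 0" "\<delta> = 1" using lt e d by auto
              then show False using key \<open>i' = a\<close> by simp
            qed
          qed
          have i'0: "i' \<ge> 0" using ge a0 i eb db by linarith
          define j' where "j' = 2 * i' + e - i"
          have j'0: "j' \<ge> 0" using ge unfolding j'_def by simp
          have e1: "2 * i' - j' + e = i" unfolding j'_def by simp
          have e2: "2 * i' * (int p - 1) + j' + e = j" using ij unfolding j'_def
            by (simp add: algebra_simps)
          obtain B where B: "quot_basis s (F (2 * i' + e) \<inter> A (2 * i' * (int p - 1) + e))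
                 (F (2 * i' + e + 1) \<inter> A (2 * i' * (int p - 1) + e)) B"
            using quot_dim1[OF VA E7[rule_format, OF i'0 e]] by blast
          have iso: "quot_tensor_iso s mul
                 (F (2 * i' + e) \<inter> A (2 * i' * (int p - 1) + e))
                 (F (2 * i' + e + 1) \<inter> A (2 * i' * (int p - 1) + e))
                 (A j') (F (2 * i' - j' + e + 1) \<inter> A j')
                 (F (2 * i' - j' + e) \<inter> A (2 * i' * (int p - 1) + j' + e))
                 (F (2 * i' - j' + e + 1) \<inter> A (2 * i' * (int p - 1) + j' + e))"
            using E8[rule_format, OF i'0 j'0 e] .
          then have W: "\<forall>w\<in>F i \<inter> A j. \<exists>B' v. finite B' \<and> B' \<subseteq> B \<and> (\<forall>b\<in>B'. v b \<in> A j')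
                   \<and> w - (\<Sum>b\<in>B'. mul b (v b)) \<in> F (i + 1) \<inter> A j"
          proof -
            have "quot_tensor_iso s mul
                 (F (2 * i' + e) \<inter> A (2 * i' * (int p - 1) + e))
                 (F (2 * i' + e + 1) \<inter> A (2 * i' * (int p - 1) + e))
                 (A j') (F (i + 1) \<inter> A j')
                 (F i \<inter> A j) (F (i + 1) \<inter> A j)"
              using iso unfolding e1 e2 .
            then have "quot_basis s (F (2 * i' + e) \<inter> A (2 * i' * (int p - 1) + e))
                 (F (2 * i' + e + 1) \<inter> A (2 * i' * (int p - 1) + e)) B \<longrightarrow>
                 (\<forall>w\<in>F i \<inter> A j. \<exists>B' v. finite B' \<and> B' \<subseteq> B \<and> (\<forall>b\<in>B'. v b \<in> A j')
                   \<and> w - (\<Sum>b\<in>B'. mul b (v b)) \<in> F (i + 1) \<inter> A j)"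
              unfolding quot_tensor_iso_def by (rule allE) (rule impI, erule mp[THEN conjunct1])
            then show ?thesis using B by (rule mp)
          qed
          obtain B' v where B': "finite B'" "B' \<subseteq> B" "\<forall>b\<in>B'. v b \<in> A j'"
            and r: "y - (\<Sum>b\<in>B'. mul b (v b)) \<in> F (i + 1) \<inter> A j"
            using bspec[OF W y] by (elim exE conjE) (rule that)
          have Bsub: "B \<subseteq> F (2 * i' + e) \<inter> A (2 * i' * (int p - 1) + e)"
            using B unfolding quot_basis_def by (rule conjunct1)
          have each: "act (mul b (v b)) m = 0" if "b \<in> B'" for b
          proof -
            have "act (v b) m \<in> M (j' + n)" using gr[rule_format, OF bspec[OF B'(3) that] n] .
            moreover have "j' + n < 2 * i' + e" using i1 e1 by simp
            moreover have "b \<in> F (2 * i' + e) \<inter> A (2 * i' * (int p - 1) + e)" using subsetD[OF Bsub subsetD[OF B'(2) that]] .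
            ultimately have "act b (act (v b) m) = 0" using H[rule_format, OF e] by blast
            then show ?thesis using mulact by simp
          qed
          have "act y m = act (y - (\<Sum>b\<in>B'. mul b (v b))) m + act (\<Sum>b\<in>B'. mul b (v b)) m"
            using act_diff[OF add] by simp
          also have "\<dots> = 0"
          proof -
            have "act (\<Sum>b\<in>B'. mul b (v b)) m = 0"
              unfolding act_sum[OF add] by (rule sum.neutral) (use each in blast)
            moreover have "act (y - (\<Sum>b\<in>B'. mul b (v b))) m = 0" using IH r by blast
            ultimately show ?thesis by simp
          qed
          finally show ?thesis .
        qed
      qed
    qed
    have "Q i" if "i \<le> N" for i
      using that
    proof (induction i rule: int_le_induct)
      case base then show ?case using QN by simp
    next
      case (step i)
      then show ?case unfolding Q_def using stepQ[of "i - 1"] by simp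
    qed
    then have "Q (n + 1)" using QN by (cases "n + 1 \<le> N") auto
    then show ?thesis using x unfolding Q_def by blast
  qed
  show "unstable F M act"
    unfolding unstable_def
  proof (intro allI impI)
    fix n a m assume a: "a \<in> F (n + 1)" and m: "m \<in> M n"
    have sp: "a \<in> VA.span (\<Union>j. F (n + 1) \<inter> A j)"
      using filt_graded a unfolding graded_subspace_def by blast
    have sub: "VA.subspace (Collect (\<lambda>x. act x m = 0))"
      unfolding VA.subspace_def using act_zero[OF add] add sc VM.scale_zero_right by simp
    have "\<And>x. x \<in> (\<Union>j. F (n + 1) \<inter> A j) \<Longrightarrow> act x m = 0" using homog m by blast
    then show "act a m = 0" using VA.span_induct[OF sp sub] by blast
  qed
qed

end
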